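(* Consider Model 3 (the risk-seeking insider model) with $N\ge1$ trading periods, as described in the context. A subgame perfect linear equilibrium exists. In this equilibrium there are real numbers $\beta_n,\lambda_n,\alpha_n,\delta_n,\Sigma_n$ such that for $n=1,\dots,N$: $x_n=\beta_n(v-p_{n-1})$, $p_n-p_{n-1}=\lambda_n y_n$, $\Sigma_n=\operatorname{Var}(v\mid y_1,\dots,y_n)$, and $$E\Big(\sum_{k=n}^N\pi_k\,\Big|\,p_1,\dots,p_{n-1},v\Big)=\alpha_{n-1}(v-p_{n-1})^2+\delta_{n-1},$$ where $$\delta_n=a_n\sigma_u\Delta t_N^{1/2}\Sigma_n^{1/2},\quad \alpha_n=b_n\sigma_u\Delta t_N^{1/2}\Sigma_n^{-1/2}\quad(n=0,\dots,N-1),\qquad \beta_n=c_n\sigma_u\Delta t_N^{1/2}\Sigma_{n-1}^{-1/2}\quad(n=1,\dots,N),$$ and the sequences $\{a_n\},\{b_n\},\{c_n\}$, with terminal values $a_{N-1}=0$, $b_{N-1}=\tfrac12$, $c_N=1$, satisfy for $n=1,\dots,N-1$ $$a_{n-1}=a_n\Big(\frac{1}{c_n^2+1}\Big)^{1/2}+b_n\Big(\frac{1}{c_n^2+1}\Big)^{3/2}c_n^2,\qquad b_{n-1}=b_n\Big(\frac{1}{c_n^2+1}\Big)^{3/2}+\frac{c_n}{c_n^2+1},\qquad -3b_nc_n+(c_n^2+1)^{1/2}(1-c_n^2)=0,$$ with $c_n>0$ for $n=1,\dots,N$.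
   Context: Model. Fix an integer $N\ge1$ and put $\Delta t_N=1/N$. A risky asset has liquidation value $v\sim N(p_0,\Sigma_0)$ with $\Sigma_0>0$. In each period $n=1,\dots,N$ noise traders submit $u_n\sim N(0,\sigma_u^2\Delta t_N)$ ($\sigma_u>0$), i.i.d. and independent of $v$. The insider knows $v$ and submits $x_n=\beta_n(v-p_{n-1})$ with $\beta_n\in\mathbb R$. The market maker observes $y_n=x_n+u_n$ and sets $p_n=E[v\mid y_1,\dots,y_n]$. The insider's profit in period $n$ is $\pi_n=x_n(v-p_n)$ and $\Sigma_n=\operatorname{Var}(v\mid y_1,\dots,y_n)$. For such strategies, with $\lambda_n=\beta_n\Sigma_{n-1}/(\beta_n^2\Sigma_{n-1}+\sigma_u^2\Delta t_N)$ one has $p_n-p_{n-1}=\lambda_ny_n$, $\Sigma_n=\Sigma_{n-1}\sigma_u^2\Delta t_N/(\beta_n^2\Sigma_{n-1}+\sigma_u^2\Delta t_N)$, and $E(\sum_{k=n}^N\pi_k\mid p_1,\dots,p_{n-1},v)=\alpha_{n-1}(v-p_{n-1})^2+\delta_{n-1}$ with $\alpha_N=\delta_N=0$, $\alpha_{n-1}=\alpha_n(1-\lambda_n\beta_n)^2+\beta_n(1-\lambda_n\beta_n)$, $\delta_{n-1}=\delta_n+\alpha_n\lambda_n^2\sigma_u^2\Delta t_N$. Here $\alpha_{n-1}(v-p_{n-1})^2$ is the "risky profit" and $\delta_{n-1}$ the "guaranteed profit". Equilibrium. An insider strategy specifies, for each period $n$ and each value $\Sigma_{n-1}>0$, an intensity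 $\beta_n$. Given the strategy for periods $n+1,\dots,N$, each choice of $\beta_n$ determines (with later intensities given by the strategy applied to the resulting variances) $\alpha_{n-1},\delta_{n-1}$ as functions of $\beta_n$ and $\Sigma_{n-1}$. A subgame perfect linear equilibrium of Model 3 is a strategy such that for every $n$ and every $\Sigma_{n-1}>0$ the prescribed $\beta_n$ first maximizes the risky profit $\alpha_{n-1}(v-p_{n-1})^2$ (i.e. maximizes $\alpha_{n-1}$) over $\beta_n\in\mathbb R$, and among those maximizers maximizes the guaranteed profit $\delta_{n-1}$, with the market maker pricing efficiently given this strategy. *)

theory Defs
  imports Complex_Main
begin

text \<open>Noise variance per period is
  s2 = sigma_u^2 * Delta t_N. A strategy is B :: nat => real => real, where
  B n S is the intensity beta_n chosen in period n when Sigma_{n-1} = S.\<close>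

definition lam_of :: "real \<Rightarrow> real \<Rightarrow> real \<Rightarrow> real" where
  "lam_of s2 b S = b * S / (b\<^sup>2 * S + s2)"

definition Sig_next :: "real \<Rightarrow> real \<Rightarrow> real \<Rightarrow> real" where
  "Sig_next s2 b S = S * s2 / (b\<^sup>2 * S + s2)"

text \<open>One backward step: given (alpha_n, delta_n) as a function g of Sigma_n,
  the intensity b = beta_n and Sigma_{n-1} = S, compute (alpha_{n-1}, delta_{n-1}).\<close>
definition step :: "real \<Rightarrow> (real \<Rightarrow> real \<times> real) \<Rightarrow> real \<Rightarrow> real \<Rightarrow> real \<times> real" where
  "step s2 g b S =
     (let l = lam_of s2 b S; S' = Sig_next s2 b S; ad = g S'
      in (fst ad * (1 - l * b)\<^sup>2 + b * (1 - l * b), snd ad + fst ad * l\<^sup>2 * s2))"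

text \<open>ADk s2 B N k S = (alpha_{N-k}, delta_{N-k}) as function of Sigma_{N-k} = S,
  when the strategy B is followed in periods N-k+1, ..., N.\<close>
primrec ADk :: "real \<Rightarrow> (nat \<Rightarrow> real \<Rightarrow> real) \<Rightarrow> nat \<Rightarrow> nat \<Rightarrow> real \<Rightarrow> real \<times> real" where
  "ADk s2 B N 0 S = (0, 0)"
| "ADk s2 B N (Suc k) S = step s2 (ADk s2 B N k) (B (N - k) S) S"

definition alpha_delta :: "real \<Rightarrow> (nat \<Rightarrow> real \<Rightarrow> real) \<Rightarrow> nat \<Rightarrow> nat \<Rightarrow> real \<Rightarrow> real \<times> real" where
  "alpha_delta s2 B N n S = ADk s2 B N (N - n) S"

text \<open>(alpha_{n-1}, delta_{n-1}) when in period n the intensity b is used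
  (with Sigma_{n-1} = S), and B is followed in periods n+1..N.\<close>
definition dev :: "real \<Rightarrow> (nat \<Rightarrow> real \<Rightarrow> real) \<Rightarrow> nat \<Rightarrow> nat \<Rightarrow> real \<Rightarrow> real \<Rightarrow> real \<times> real" where
  "dev s2 B N n S b = step s2 (alpha_delta s2 B N n) b S"

text \<open>Subgame perfect linear equilibrium of Model 3: lexicographic maximisation,
  first of the risky profit coefficient alpha_{n-1}, then of delta_{n-1}.\<close>
definition spe :: "real \<Rightarrow> (nat \<Rightarrow> real \<Rightarrow> real) \<Rightarrow> nat \<Rightarrow> bool" where
  "spe s2 B N \<longleftrightarrow>
    (\<forall>n\<in>{1..N}. \<forall>S>0.
       (\<forall>b. fst (dev s2 B N n S b) \<le> fst (dev s2 B N n S (B n S))) \<and>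
       (\<forall>b. fst (dev s2 B N n S b) = fst (dev s2 B N n S (B n S)) \<longrightarrow>
            snd (dev s2 B N n S b) \<le> snd (dev s2 B N n S (B n S))))"

primrec Sig_path :: "real \<Rightarrow> (nat \<Rightarrow> real \<Rightarrow> real) \<Rightarrow> real \<Rightarrow> nat \<Rightarrow> real" where
  "Sig_path s2 B S0 0 = S0"
| "Sig_path s2 B S0 (Suc n) =
     Sig_next s2 (B (Suc n) (Sig_path s2 B S0 n)) (Sig_path s2 B S0 n)"

end

theory Submission
  imports Defs
begin

definition hh :: "real \<Rightarrow> real \<Rightarrow> real" where "hh \<beta> x = sqrt (x\<^sup>2+1) * (1 - x\<^sup>2) - 3*\<beta>*x"
definition GG :: "real \<Rightarrow> real \<Rightarrow> real" where "GG \<beta> x = \<beta> / ((x\<^sup>2+1) * sqrt (x\<^sup>2+1)) + x/(x\<^sup>2+1)"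
definition rt :: "real \<Rightarrow> real" where "rt \<beta> = (THE c. 0 \<le> c \<and> hh \<beta> c = 0)"

lemma GG_deriv: "(GG \<beta> has_real_derivative (hh \<beta> x / ((x\<^sup>2+1)^2 * sqrt (x\<^sup>2+1)))) (at x)"
proof -
  have p: "x\<^sup>2+1 > (0::real)" using zero_le_power2[of x] by linarith
  have q: "sqrt (x\<^sup>2+1) > 0" using p by simp
  have qq: "sqrt (x\<^sup>2+1) ^ 2 = x\<^sup>2+1" using p by simp
  show ?thesis unfolding GG_def
    apply (rule derivative_eq_intros refl | use q p in force)+
    using q p qq unfolding hh_def
    apply (simp add: inverse_eq_divide)
    apply (simp add: divide_simps)
    apply (simp add: algebra_simps power2_eq_square)
    done
qed

lemma hh_deriv: "(hh \<beta> has_real_derivative (- (x*(1+3*x\<^sup>2)) / sqrt (x\<^sup>2+1) - 3*\<beta>)) (at x)"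
proof -
  have p: "x\<^sup>2+1 > (0::real)" using zero_le_power2[of x] by linarith
  have q: "sqrt (x\<^sup>2+1) > 0" using p by simp
  have qq: "sqrt (x\<^sup>2+1) ^ 2 = x\<^sup>2+1" using p by simp
  show ?thesis unfolding hh_def
    apply (rule derivative_eq_intros refl | use q p in force)+
    using q p qq
    apply (simp add: inverse_eq_divide)
    apply (simp add: divide_simps)
    apply (simp add: algebra_simps power2_eq_square)
    done
qed

lemma hh_cont: "continuous_on A (hh \<beta>)"
  by (meson DERIV_isCont continuous_at_imp_continuous_on hh_deriv)
lemma GG_cont: "continuous_on A (GG \<beta>)"
  by (meson DERIV_isCont continuous_at_imp_continuous_on GG_deriv)

lemma hh_decr: assumes "\<beta> \<ge> 0" "0 \<le> x" "x < y" shows "hh \<beta> y < hh \<beta> x"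
proof (rule DERIV_neg_imp_decreasing_open[OF assms(3)])
  fix z assume z: "x < z" "z < y"
  have p: "z\<^sup>2+1 > (0::real)" using zero_le_power2[of z] by linarith
  have q: "sqrt (z\<^sup>2+1) > 0" using p by simp
  have "z*(1+3*z\<^sup>2) > 0" using z assms p by (simp add: add_pos_nonneg)
  hence "(z*(1+3*z\<^sup>2)) / sqrt (z\<^sup>2+1) > 0" using q by (rule divide_pos_pos)
  hence "- (z*(1+3*z\<^sup>2)) / sqrt (z\<^sup>2+1) - 3*\<beta> < 0" using assms by simp
  thus "\<exists>y. (hh \<beta> has_real_derivative y) (at z) \<and> y < 0" using hh_deriv by blast
qed (rule hh_cont)

lemma hh_root: assumes "\<beta> \<ge> 0" shows "0 < rt \<beta>" "hh \<beta> (rt \<beta>) = 0"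
proof -
  have h1: "hh \<beta> 1 \<le> 0" "0 \<le> hh \<beta> 0" using assms by (auto simp: hh_def)
  have "\<exists>c. 0 \<le> c \<and> c \<le> 1 \<and> hh \<beta> c = 0"
    by (rule IVT2'[OF h1(1) h1(2) zero_le_one hh_cont])
  then obtain c where c: "0 \<le> c" "hh \<beta> c = 0" by blast
  have u: "d = c" if "0 \<le> d \<and> hh \<beta> d = 0" for d
  proof (rule ccontr)
    assume "d \<noteq> c"
    hence "d < c \<or> c < d" by linarith
    thus False using hh_decr[OF assms, of d c] hh_decr[OF assms, of c d] that c by auto
  qed
  have "rt \<beta> = c" unfolding rt_def
    by (rule the_equality) (use c u in blast)+
  moreover have "hh \<beta> 0 = 1" by (simp add: hh_def)
  hence "c \<noteq> 0" using c by force
  ultimately show "0 < rt \<beta>" "hh \<beta> (rt \<beta>) = 0" using c by auto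
qed

lemma GG_max: assumes "\<beta> \<ge> 0" "x \<noteq> rt \<beta>" shows "GG \<beta> x < GG \<beta> (rt \<beta>)"
proof -
  let ?c = "rt \<beta>"
  have c: "0 < ?c" "hh \<beta> ?c = 0" using hh_root[OF assms(1)] by auto
  have pos: "\<And>z. hh \<beta> z / ((z\<^sup>2+1)^2 * sqrt (z\<^sup>2+1)) > 0 \<longleftrightarrow> hh \<beta> z > 0"
       "\<And>z. hh \<beta> z / ((z\<^sup>2+1)^2 * sqrt (z\<^sup>2+1)) < 0 \<longleftrightarrow> hh \<beta> z < 0"
  proof -
    fix z :: real
    have p: "z\<^sup>2+1 > (0::real)" using zero_le_power2[of z] by linarith
    have "(z\<^sup>2+1)^2 * sqrt (z\<^sup>2+1) > 0" using p by simp
    thus "hh \<beta> z / ((z\<^sup>2+1)^2 * sqrt (z\<^sup>2+1)) > 0 \<longleftrightarrow> hh \<beta> z > 0"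
         "hh \<beta> z / ((z\<^sup>2+1)^2 * sqrt (z\<^sup>2+1)) < 0 \<longleftrightarrow> hh \<beta> z < 0"
      by (auto simp: zero_less_divide_iff divide_less_0_iff)
  qed
  have A: "GG \<beta> z < GG \<beta> ?c" if "0 \<le> z" "z < ?c" for z
  proof (rule DERIV_pos_imp_increasing_open[OF that(2)])
    fix w assume w: "z < w" "w < ?c"
    have "hh \<beta> w > 0" using hh_decr[OF assms(1), of w ?c] c w that by auto
    thus "\<exists>y. (GG \<beta> has_real_derivative y) (at w) \<and> y > 0" using GG_deriv pos by blast
  qed (rule GG_cont)
  have B: "GG \<beta> z < GG \<beta> ?c" if "?c < z" for z
  proof (rule DERIV_neg_imp_decreasing_open[OF that])
    fix w assume w: "?c < w" "w < z"
    have "hh \<beta> w < 0" using hh_decr[OF assms(1), of ?c w] c w that by auto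
    thus "\<exists>y. (GG \<beta> has_real_derivative y) (at w) \<and> y < 0" using GG_deriv pos by blast
  qed (rule GG_cont)
  show ?thesis
  proof (cases "x \<ge> 0")
    case True
    show ?thesis
    proof (cases "x < ?c")
      case True2: True thus ?thesis using A True by blast
    next
      case False thus ?thesis using B assms(2) by simp
    qed
  next
    case False
    have p: "x\<^sup>2+1 > (0::real)" using zero_le_power2[of x] by linarith
    have "x/(x\<^sup>2+1) < (-x)/(x\<^sup>2+1)" using False p by (simp add: divide_less_0_iff)
    hence "GG \<beta> x < GG \<beta> (-x)" unfolding GG_def by simp
    moreover have "GG \<beta> (-x) \<le> GG \<beta> ?c"
    proof -
      consider "-x < ?c" | "-x = ?c" | "?c < -x" by linarith
      thus ?thesis
      proof cases
        case 1 thus ?thesis using A[of "-x"] False by simp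
      next
        case 2 thus ?thesis by simp
      next
        case 3 thus ?thesis using B[of "-x"] by simp
      qed
    qed
    ultimately show ?thesis by linarith
  qed
qed

definition HH :: "real \<Rightarrow> real \<Rightarrow> real \<Rightarrow> real" where
  "HH \<alpha> \<beta> x = \<alpha> / sqrt (x\<^sup>2+1) + \<beta> * x\<^sup>2 / ((x\<^sup>2+1) * sqrt (x\<^sup>2+1))"

lemma step_eval':
  fixes k S x :: real
  assumes k: "k > 0" and S: "S > 0"
    and g: "\<And>S'. S' > 0 \<Longrightarrow> g S' = (\<beta> * sqrt (k\<^sup>2*S / S'), \<alpha> * sqrt (k\<^sup>2*S * S'))"
  shows "step (k\<^sup>2*S) g (x*k) S = (k * GG \<beta> x, (k*S) * HH \<alpha> \<beta> x)"
proof -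
  have p: "x\<^sup>2+1 > (0::real)" using zero_le_power2[of x] by linarith
  define q where "q = sqrt (x\<^sup>2+1)"
  have q: "q > 0" "q^2 = x\<^sup>2+1" using p by (auto simp: q_def)
  have D: "(x*k)\<^sup>2 * S + k\<^sup>2*S = k\<^sup>2*S*(x\<^sup>2+1)" by (simp add: algebra_simps power_mult_distrib)
  have L: "lam_of (k\<^sup>2*S) (x*k) S = x / (k*(x\<^sup>2+1))"
  proof -
    have "k\<^sup>2*S*(x\<^sup>2+1) = (k*S)*(k*(x\<^sup>2+1))" by (simp add: power2_eq_square)
    moreover have "x*k*S = x*(k*S)" by simp
    ultimately show ?thesis unfolding lam_of_def D using k S p by simp
  qed
  have Sg: "Sig_next (k\<^sup>2*S) (x*k) S = S / (x\<^sup>2+1)"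
  proof -
    have "k\<^sup>2*S \<noteq> 0" using k S by simp
    thus ?thesis unfolding Sig_next_def D by (simp add: mult.commute[of S "k\<^sup>2*S"])
  qed
  have Sp: "S / (x\<^sup>2+1) > 0" using S p by simp
  have r1: "sqrt (k\<^sup>2*S / (S / (x\<^sup>2+1))) = k * q"
  proof -
    have "k\<^sup>2*S / (S / (x\<^sup>2+1)) = k\<^sup>2 * (x\<^sup>2+1)" using S p by (simp add: field_simps)
    thus ?thesis using k by (simp add: real_sqrt_mult q_def)
  qed
  have r2: "sqrt (k\<^sup>2*S * (S / (x\<^sup>2+1))) = k * S / q"
  proof -
    have e: "k\<^sup>2*S * (S / (x\<^sup>2+1)) = (k*S)\<^sup>2 / (x\<^sup>2+1)" using S p by (simp add: field_simps power2_eq_square)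
    have "sqrt ((k*S)\<^sup>2 / (x\<^sup>2+1)) = k * S / q" using k S by (simp add: real_sqrt_divide q_def)
    thus ?thesis by (simp only: e)
  qed
  have G: "g (Sig_next (k\<^sup>2*S) (x*k) S) = (\<beta> * (k*q), \<alpha> * (k*S/q))"
    using g[OF Sp] Sg r1 r2 by simp
  have lb: "1 - x / (k*(x\<^sup>2+1)) * (x*k) = 1 / (x\<^sup>2+1)"
  proof -
    have n: "k*(x\<^sup>2+1) \<noteq> 0" "x\<^sup>2+1 \<noteq> 0" using k p by auto
    have "x / (k*(x\<^sup>2+1)) * (x*k) = x\<^sup>2/(x\<^sup>2+1)" using n by (simp add: field_simps power2_eq_square)
    thus ?thesis using n by (simp add: field_simps)
  qed
  have e1': "\<beta> * (k*q) * (1 / q^2)\<^sup>2 + x*k * (1 / q^2) = k * (\<beta> / (q^2 * q) + x / q^2)"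
    using q(1) by (simp add: field_simps power2_eq_square)
  have e1: "\<beta> * (k*q) * (1 / (x\<^sup>2+1))\<^sup>2 + x*k * (1 / (x\<^sup>2+1)) = k * GG \<beta> x"
    using e1' unfolding q(2) by (simp only: GG_def q_def)
  have e2': "\<alpha> * (k*S/q) + \<beta> * (k*q) * (x / (k*q^2))\<^sup>2 * (k\<^sup>2*S) = (k*S) * (\<alpha> / q + \<beta> * x\<^sup>2 / (q^2 * q))"
    using q(1) k by (simp add: field_simps power2_eq_square)
  have e2: "\<alpha> * (k*S/q) + \<beta> * (k*q) * (x / (k*(x\<^sup>2+1)))\<^sup>2 * (k\<^sup>2*S) = (k*S) * HH \<alpha> \<beta> x"
    using e2' unfolding q(2) by (simp only: HH_def q_def)
  show ?thesis unfolding step_def Let_def G L lb using e1 e2 by simp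
qed

lemma rt_unique: assumes "\<beta> \<ge> 0" "0 \<le> c" "hh \<beta> c = 0" shows "rt \<beta> = c"
proof (rule ccontr)
  assume ne: "rt \<beta> \<noteq> c"
  have r: "0 < rt \<beta>" "hh \<beta> (rt \<beta>) = 0" using hh_root[OF assms(1)] by auto
  from ne have "rt \<beta> < c \<or> c < rt \<beta>" by linarith
  thus False using hh_decr[OF assms(1), of "rt \<beta>" c] hh_decr[OF assms(1), of c "rt \<beta>"] r assms by auto
qed

lemma rt0: "rt 0 = 1"
  by (rule rt_unique) (auto simp: hh_def)

lemma pw1: assumes "y > (0::real)" shows "(1/y) powr (1/2) = 1 / sqrt y"
  using assms by (simp add: powr_half_sqrt real_sqrt_divide)

lemma pw3: assumes "y > (0::real)" shows "(1/y) powr (3/2) = 1 / (y * sqrt y)"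
proof -
  have "(1/y) powr (3/2) = (1/y) powr (1 + 1/2)" by simp
  also have "\<dots> = (1/y) powr 1 * (1/y) powr (1/2)" by (rule powr_add)
  also have "\<dots> = (1/y) * (1 / sqrt y)" using assms by (simp add: pw1 powr_one)
  finally show ?thesis by simp
qed

lemma step_eval:
  fixes s2 S b :: real
  assumes s2: "s2 > 0" and S: "S > 0"
    and g: "\<And>S'. S' > 0 \<Longrightarrow> g S' = (\<beta> * sqrt (s2 / S'), \<alpha> * sqrt (s2 * S'))"
  shows "step s2 g b S = (sqrt (s2/S) * GG \<beta> (b / sqrt (s2/S)), sqrt (s2*S) * HH \<alpha> \<beta> (b / sqrt (s2/S)))"
proof -
  define k where "k = sqrt (s2/S)"
  have k: "k > 0" using s2 S by (simp add: k_def)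
  have ks: "k\<^sup>2 * S = s2" using s2 S by (simp add: k_def)
  have kb: "b = (b/k) * k" using k by simp
  have kS: "sqrt (s2*S) = k*S"
  proof -
    have "s2*S = (k*S)\<^sup>2" using ks by (simp add: power2_eq_square algebra_simps)
    thus ?thesis using k S by simp
  qed
  have g': "\<And>S'. S' > 0 \<Longrightarrow> g S' = (\<beta> * sqrt (k\<^sup>2*S / S'), \<alpha> * sqrt (k\<^sup>2*S * S'))"
    using g ks by simp
  have "step (k\<^sup>2*S) g ((b/k)*k) S = (k * GG \<beta> (b/k), (k*S) * HH \<alpha> \<beta> (b/k))"
    by (rule step_eval'[OF k S g'])
  thus ?thesis using ks kb kS by (simp add: k_def[symmetric])
qed

fun seq :: "nat \<Rightarrow> real \<times> real" where
  "seq 0 = (0, 0)"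
| "seq (Suc k) = (let \<beta> = fst (seq k); \<alpha> = snd (seq k); c = rt \<beta> in (GG \<beta> c, HH \<alpha> \<beta> c))"

definition bK where "bK k = fst (seq k)"
definition aK where "aK k = snd (seq k)"

lemma bK_Suc: "bK (Suc k) = GG (bK k) (rt (bK k))" by (simp add: bK_def aK_def Let_def)
lemma aK_Suc: "aK (Suc k) = HH (aK k) (bK k) (rt (bK k))" by (simp add: bK_def aK_def Let_def)
lemma bK0: "bK 0 = 0" and aK0: "aK 0 = 0" by (simp_all add: bK_def aK_def)

lemma bK_nonneg: "bK k \<ge> 0"
proof (induction k)
  case 0 thus ?case by (simp add: bK0)
next
  case (Suc k)
  let ?c = "rt (bK k)"
  have c: "?c > 0" using hh_root[OF Suc] by auto
  have p: "?c\<^sup>2+1 > 0" using zero_le_power2[of ?c] by linarith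
  have "bK k / ((?c\<^sup>2+1) * sqrt (?c\<^sup>2+1)) \<ge> 0" using Suc p by simp
  moreover have "?c/(?c\<^sup>2+1) \<ge> 0" using c p by simp
  ultimately show ?case unfolding bK_Suc GG_def by linarith
qed

lemma ADk_eval:
  assumes s2: "s2 > 0" and "k \<le> N" and "S > 0"
    and B: "B = (\<lambda>n S. rt (bK (N - n)) * sqrt (s2 / S))"
  shows "ADk s2 B N k S = (bK k * sqrt (s2/S), aK k * sqrt (s2*S))"
  using assms(2,3)
proof (induction k arbitrary: S)
  case 0 thus ?case by (simp add: bK0 aK0)
next
  case (Suc k)
  have IH: "\<And>S'. S' > 0 \<Longrightarrow> ADk s2 B N k S' = (bK k * sqrt (s2/S'), aK k * sqrt (s2*S'))"
    using Suc by simp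
  have kk: "N - (N - k) = k" using Suc.prems by simp
  have BB: "B (N - k) S = rt (bK k) * sqrt (s2/S)" using B kk by simp
  have sq: "sqrt (s2/S) > 0" using s2 Suc.prems by simp
  have "ADk s2 B N (Suc k) S = step s2 (ADk s2 B N k) (B (N - k) S) S" by simp
  also have "\<dots> = (sqrt (s2/S) * GG (bK k) (rt (bK k)), sqrt (s2*S) * HH (aK k) (bK k) (rt (bK k)))"
    using step_eval[OF s2 Suc.prems(2) IH, of "B (N - k) S"] BB sq by simp
  finally show ?case by (simp add: bK_Suc aK_Suc)
qed

lemma Sig_pos: assumes "s2 > 0" "S0 > 0" shows "Sig_path s2 B S0 n > 0"
proof (induction n)
  case 0 thus ?case using assms by simp
next
  case (Suc n)
  let ?S = "Sig_path s2 B S0 n" and ?b = "B (Suc n) (Sig_path s2 B S0 n)"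
  have "?b\<^sup>2 * ?S + s2 > 0" using Suc assms by (simp add: add_nonneg_pos)
  thus ?case using Suc assms by (simp add: Sig_next_def)
qed

theorem theorem5:
  fixes N :: nat and sigma_u Sigma0 :: real
  assumes "N \<ge> 1" and "sigma_u > 0" and "Sigma0 > 0"
  defines "dt \<equiv> 1 / real N"
  defines "s2 \<equiv> sigma_u\<^sup>2 * dt"
  shows "\<exists>B :: nat \<Rightarrow> real \<Rightarrow> real. \<exists>a b c :: nat \<Rightarrow> real.
    spe s2 B N \<and>
    a (N - 1) = 0 \<and> b (N - 1) = 1 / 2 \<and> c N = 1 \<and>
    (\<forall>n\<in>{1..N - 1}.
       a (n - 1) = a n * (1 / (c n ^ 2 + 1)) powr (1 / 2)
                   + b n * (1 / (c n ^ 2 + 1)) powr (3 / 2) * c n ^ 2 \<and>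
       b (n - 1) = b n * (1 / (c n ^ 2 + 1)) powr (3 / 2) + c n / (c n ^ 2 + 1) \<and>
       - 3 * b n * c n + (c n ^ 2 + 1) powr (1 / 2) * (1 - c n ^ 2) = 0) \<and>
    (\<forall>n\<in>{1..N}. c n > 0) \<and>
    (let Sig = Sig_path s2 B Sigma0 in
      (\<forall>n\<in>{0..N - 1}.
         snd (alpha_delta s2 B N n (Sig n)) = a n * sigma_u * sqrt dt * sqrt (Sig n) \<and>
         fst (alpha_delta s2 B N n (Sig n)) = b n * sigma_u * sqrt dt / sqrt (Sig n)) \<and>
      (\<forall>n\<in>{1..N}. B n (Sig (n - 1)) = c n * sigma_u * sqrt dt / sqrt (Sig (n - 1))))"
  proof -
  have dt: "dt > 0" using assms(1) by (simp add: dt_def)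
  have s2p: "s2 > 0" using dt assms(2) by (simp add: s2_def)
  have sqs2: "sqrt s2 = sigma_u * sqrt dt" using assms(2) dt by (simp add: s2_def real_sqrt_mult)
  define B where "B = (\<lambda>n S. rt (bK (N - n)) * sqrt (s2 / S))"
  have AD: "\<And>k S. k \<le> N \<Longrightarrow> S > 0 \<Longrightarrow> ADk s2 B N k S = (bK k * sqrt (s2/S), aK k * sqrt (s2*S))"
    using ADk_eval[OF s2p _ _ B_def] by blast
  have spe: "spe s2 B N"
    unfolding spe_def
  proof (intro ballI allI impI conjI)
    fix n S assume n: "n \<in> {1..N}" and S: "(S::real) > 0"
    let ?\<beta> = "bK (N - n)" and ?\<alpha> = "aK (N - n)" and ?k = "sqrt (s2/S)"
    have k: "?k > 0" using s2p S by simp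
    have g: "\<And>S'. S' > 0 \<Longrightarrow> alpha_delta s2 B N n S' = (?\<beta> * sqrt (s2/S'), ?\<alpha> * sqrt (s2*S'))"
      unfolding alpha_delta_def using AD by simp
    have dv: "\<And>b. dev s2 B N n S b = (?k * GG ?\<beta> (b/?k), sqrt (s2*S) * HH ?\<alpha> ?\<beta> (b/?k))"
      unfolding dev_def by (rule step_eval[OF s2p S g])
    have Bn: "B n S / ?k = rt ?\<beta>"
    proof -
      have "B n S = rt ?\<beta> * ?k" by (simp add: B_def)
      moreover have "?k \<noteq> 0" using k by linarith
      ultimately show ?thesis by (metis nonzero_mult_div_cancel_right)
    qed
    have mx: "GG ?\<beta> x < GG ?\<beta> (rt ?\<beta>)" if "x \<noteq> rt ?\<beta>" for x
      using GG_max[OF bK_nonneg that] .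
    show "fst (dev s2 B N n S b) \<le> fst (dev s2 B N n S (B n S))" for b
    proof -
      have "GG ?\<beta> (b/?k) \<le> GG ?\<beta> (rt ?\<beta>)" using mx by (cases "b/?k = rt ?\<beta>") (auto intro: less_imp_le)
      thus ?thesis unfolding dv Bn using k by simp
    qed
    show "snd (dev s2 B N n S b) \<le> snd (dev s2 B N n S (B n S))"
      if eq: "fst (dev s2 B N n S b) = fst (dev s2 B N n S (B n S))" for b
    proof -
      have "GG ?\<beta> (b/?k) = GG ?\<beta> (rt ?\<beta>)" using eq k s2p S unfolding dv Bn by simp
      hence "b/?k = rt ?\<beta>" using mx by force
      moreover have "?k \<noteq> 0" using k by linarith
      ultimately have "b = rt ?\<beta> * ?k" by (simp add: divide_eq_eq)
      hence "b = B n S" by (simp add: B_def)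
      thus ?thesis by simp
    qed
  qed
  define a where "a = (\<lambda>n. aK (N - n))"
  define b where "b = (\<lambda>n. bK (N - n))"
  define c where "c = (\<lambda>n. rt (bK (N - n)))"
  have N1: "N - (N - 1) = 1" using assms(1) by simp
  have aN: "a (N - 1) = 0" unfolding a_def N1 by (simp add: aK_Suc[of 0, simplified] aK0 bK0 HH_def)
  have bN: "b (N - 1) = 1/2" unfolding b_def N1 by (simp add: bK_Suc[of 0, simplified] bK0 rt0 GG_def)
  have cN: "c N = 1" unfolding c_def by (simp add: bK0 rt0)
  have rec: "\<forall>n\<in>{1..N - 1}.
       a (n - 1) = a n * (1 / (c n ^ 2 + 1)) powr (1 / 2)
                   + b n * (1 / (c n ^ 2 + 1)) powr (3 / 2) * c n ^ 2 \<and>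
       b (n - 1) = b n * (1 / (c n ^ 2 + 1)) powr (3 / 2) + c n / (c n ^ 2 + 1) \<and>
       - 3 * b n * c n + (c n ^ 2 + 1) powr (1 / 2) * (1 - c n ^ 2) = 0"
  proof
    fix n assume n: "n \<in> {1..N - 1}"
    have Nn: "N - (n - 1) = Suc (N - n)" using n by auto
    let ?c = "c n"
    have p: "?c\<^sup>2+1 > 0" using zero_le_power2[of ?c] by linarith
    have h: "hh (b n) ?c = 0" unfolding b_def c_def using hh_root[OF bK_nonneg] by blast
    show "a (n - 1) = a n * (1 / (c n ^ 2 + 1)) powr (1 / 2)
                   + b n * (1 / (c n ^ 2 + 1)) powr (3 / 2) * c n ^ 2 \<and>
       b (n - 1) = b n * (1 / (c n ^ 2 + 1)) powr (3 / 2) + c n / (c n ^ 2 + 1) \<and>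
       - 3 * b n * c n + (c n ^ 2 + 1) powr (1 / 2) * (1 - c n ^ 2) = 0"
    proof (intro conjI)
      show "a (n - 1) = a n * (1 / (c n ^ 2 + 1)) powr (1 / 2)
                   + b n * (1 / (c n ^ 2 + 1)) powr (3 / 2) * c n ^ 2"
        unfolding pw1[OF p] pw3[OF p] unfolding a_def b_def c_def Nn aK_Suc HH_def by simp
      show "b (n - 1) = b n * (1 / (c n ^ 2 + 1)) powr (3 / 2) + c n / (c n ^ 2 + 1)"
        unfolding pw3[OF p] unfolding b_def c_def Nn bK_Suc GG_def by simp
      show "- 3 * b n * c n + (c n ^ 2 + 1) powr (1 / 2) * (1 - c n ^ 2) = 0"
        using h p by (simp add: hh_def powr_half_sqrt)
    qed
  qed
  have cpos: "\<forall>n\<in>{1..N}. c n > 0" unfolding c_def using hh_root[OF bK_nonneg] by blast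
  have path: "let Sig = Sig_path s2 B Sigma0 in
      (\<forall>n\<in>{0..N - 1}.
         snd (alpha_delta s2 B N n (Sig n)) = a n * sigma_u * sqrt dt * sqrt (Sig n) \<and>
         fst (alpha_delta s2 B N n (Sig n)) = b n * sigma_u * sqrt dt / sqrt (Sig n)) \<and>
      (\<forall>n\<in>{1..N}. B n (Sig (n - 1)) = c n * sigma_u * sqrt dt / sqrt (Sig (n - 1)))"
    unfolding Let_def
  proof (intro conjI ballI)
    fix n assume n: "n \<in> {0..N - 1}"
    let ?S = "Sig_path s2 B Sigma0 n"
    have S: "?S > 0" using Sig_pos[OF s2p assms(3)] .
    have e: "alpha_delta s2 B N n ?S = (b n * sqrt (s2/?S), a n * sqrt (s2*?S))"
      unfolding alpha_delta_def a_def b_def using AD[OF _ S] by simp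
    show "snd (alpha_delta s2 B N n ?S) = a n * sigma_u * sqrt dt * sqrt ?S"
      unfolding e using sqs2 by (simp add: real_sqrt_mult)
    show "fst (alpha_delta s2 B N n ?S) = b n * sigma_u * sqrt dt / sqrt ?S"
      unfolding e using sqs2 by (simp add: real_sqrt_divide)
  next
    fix n assume n: "n \<in> {1..N}"
    show "B n (Sig_path s2 B Sigma0 (n - 1)) = c n * sigma_u * sqrt dt / sqrt (Sig_path s2 B Sigma0 (n - 1))"
      unfolding B_def c_def using sqs2 by (simp add: real_sqrt_divide)
  qed
  show ?thesis
    apply (rule exI[of _ B], rule exI[of _ a], rule exI[of _ b], rule exI[of _ c])
    using spe aN bN cN rec cpos path by blast
qed

end
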